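(* The statement "not every subobject of $\mathbb{N}$ is countable" is valid in $\mathsf{RT}(\mathcal{K}_2)$.
   Context: $\mathsf{RT}(\mathcal{K}_2)$ is the function realizability topos (realizability topos over Kleene's second partial combinatory algebra $\mathcal{K}_2$), with intuitionistic internal language; the statement quantifies internally over the power object of $\mathbb{N}$. A set $X$ is countable if there is a surjection $\mathbb{N} \to X+1$. *)

theory Defs
  imports "HOL-Library.Nat_Bijection"
begin

type_synonym baire = "nat \<Rightarrow> nat"

definition K2_app :: "baire \<Rightarrow> baire \<Rightarrow> baire option" where
  "K2_app a b =
     (if \<forall>n. \<exists>k. 0 < a (list_encode (n # map b [0..<k]))
      then Some (\<lambda>n. a (list_encode (n # map b
              [0..<(LEAST k. 0 < a (list_encode (n # map b [0..<k])))])) - 1)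
      else None)"

definition K2_fst :: "baire \<Rightarrow> baire" where "K2_fst e = (\<lambda>n. e (2 * n))"
definition K2_snd :: "baire \<Rightarrow> baire" where "K2_snd e = (\<lambda>n. e (2 * n + 1))"
definition K2_tl :: "baire \<Rightarrow> baire" where "K2_tl e = (\<lambda>n. e (Suc n))"
definition K2_num :: "nat \<Rightarrow> baire" where "K2_num n = (\<lambda>_. n)"

type_synonym rprop = "baire set"

definition r_imp :: "rprop \<Rightarrow> rprop \<Rightarrow> rprop" where
  "r_imp P Q = {e. \<forall>a\<in>P. \<exists>b. K2_app e a = Some b \<and> b \<in> Q}"

definition r_false :: rprop where "r_false = {}"

definition r_not :: "rprop \<Rightarrow> rprop" where "r_not P = r_imp P r_false"

definition r_and :: "rprop \<Rightarrow> rprop \<Rightarrow> rprop" where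
  "r_and P Q = {e. K2_fst e \<in> P \<and> K2_snd e \<in> Q}"

definition r_or :: "rprop \<Rightarrow> rprop \<Rightarrow> rprop" where
  "r_or P Q = {e. (e 0 = 0 \<and> K2_tl e \<in> P) \<or> (e 0 \<noteq> 0 \<and> K2_tl e \<in> Q)}"

definition r_eq :: "nat \<Rightarrow> nat \<Rightarrow> rprop" where
  "r_eq n m = (if n = m then UNIV else {})"

definition r_all_nat :: "(nat \<Rightarrow> rprop) \<Rightarrow> rprop" where
  "r_all_nat F = {e. \<forall>n. \<exists>b. K2_app e (K2_num n) = Some b \<and> b \<in> F n}"

definition r_ex_nat :: "(nat \<Rightarrow> rprop) \<Rightarrow> rprop" where
  "r_ex_nat F = {e. \<exists>n. K2_fst e = K2_num n \<and> K2_snd e \<in> F n}"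

text \<open>Quantifiers over power objects P(X) of discrete objects X (here N and N x N):
  subobjects are arbitrary realizability predicates X \<Rightarrow> rprop; quantification is uniform.\<close>
definition r_all_pow :: "(('x \<Rightarrow> rprop) \<Rightarrow> rprop) \<Rightarrow> rprop" where
  "r_all_pow F = (\<Inter>A. F A)"

definition r_ex_pow :: "(('x \<Rightarrow> rprop) \<Rightarrow> rprop) \<Rightarrow> rprop" where
  "r_ex_pow F = (\<Union>A. F A)"

definition r_valid :: "rprop \<Rightarrow> bool" where
  "r_valid P \<longleftrightarrow> P \<noteq> {}"

text \<open>A + 1 is represented as the subobject of N: 0 is the extra point, Suc m stands for m in A.\<close>
definition in_A1 :: "(nat \<Rightarrow> rprop) \<Rightarrow> nat \<Rightarrow> rprop" where
  "in_A1 A y = r_or (r_eq y 0) (r_ex_nat (\<lambda>m. r_and (r_eq y (Suc m)) (A m)))"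

text \<open>"A is countable": there is a surjection N \<rightarrow> A + 1, i.e. a relation R \<subseteq> N \<times> (A+1)
  which is total, functional and surjective.\<close>
definition r_countable :: "(nat \<Rightarrow> rprop) \<Rightarrow> rprop" where
  "r_countable A = r_ex_pow (\<lambda>R :: nat \<times> nat \<Rightarrow> rprop.
     r_and
       (r_all_nat (\<lambda>n. r_ex_nat (\<lambda>y. r_and (R (n, y)) (in_A1 A y))))
     (r_and
       (r_all_nat (\<lambda>n. r_all_nat (\<lambda>y. r_all_nat (\<lambda>y'.
          r_imp (r_and (R (n, y)) (R (n, y'))) (r_eq y y')))))
       (r_all_nat (\<lambda>y. r_imp (in_A1 A y) (r_ex_nat (\<lambda>n. R (n, y)))))))"

end

theory Submission
  imports Defs
begin

lemma num_inj: "K2_num a = K2_num b \<Longrightarrow> a = b"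
  unfolding K2_num_def by meson

lemma and_nonempty:
  assumes "x \<in> P" "z \<in> Q" shows "\<exists>c. c \<in> r_and P Q"
proof -
  let ?c = "\<lambda>k. if even k then x (k div 2) else z (k div 2)"
  have "K2_fst ?c = x" "K2_snd ?c = z" unfolding K2_fst_def K2_snd_def by auto
  thus ?thesis using assms unfolding r_and_def by (intro exI[of _ ?c]) simp
qed

lemma y_zero:
  assumes "e \<in> r_countable (\<lambda>_. {})"
    and "K2_app (K2_fst e) (K2_num n) = Some b" and "K2_fst b = K2_num y"
  shows "y = 0"
proof -
  from assms(1) obtain R where "K2_fst e \<in> r_all_nat (\<lambda>n. r_ex_nat (\<lambda>y. r_and (R (n, y)) (in_A1 (\<lambda>_. {}) y)))"
    unfolding r_countable_def r_ex_pow_def r_and_def by blast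
  then obtain b' where "K2_app (K2_fst e) (K2_num n) = Some b'"
     "b' \<in> r_ex_nat (\<lambda>y. r_and (R (n, y)) (in_A1 (\<lambda>_. {}) y))"
    unfolding r_all_nat_def by blast
  with assms(2) have "b \<in> r_ex_nat (\<lambda>y. r_and (R (n, y)) (in_A1 (\<lambda>_. {}) y))" by simp
  then obtain y' where "K2_fst b = K2_num y'" "K2_snd b \<in> r_and (R (n, y')) (in_A1 (\<lambda>_. {}) y')"
    unfolding r_ex_nat_def by blast
  hence "y' = y" and "K2_snd (K2_snd b) \<in> in_A1 (\<lambda>_. {}) y'"
    using assms(3) num_inj unfolding r_and_def by auto
  thus "y = 0"
    unfolding in_A1_def r_or_def r_ex_nat_def r_and_def r_eq_def by (auto split: if_splits)
qed

lemma no_uniform: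
  assumes "e \<in> r_all_pow (\<lambda>A :: nat \<Rightarrow> rprop. r_countable A)"
  shows False
proof -
  have e1: "e \<in> r_countable (\<lambda>_. {})" using assms unfolding r_all_pow_def by blast
  have "e \<in> r_countable (\<lambda>_. UNIV)" using assms unfolding r_all_pow_def by blast
  then obtain R where
    tot: "K2_fst e \<in> r_all_nat (\<lambda>n. r_ex_nat (\<lambda>y. r_and (R (n, y)) (in_A1 (\<lambda>_. UNIV) y)))" and
    fnc: "K2_fst (K2_snd e) \<in> r_all_nat (\<lambda>n. r_all_nat (\<lambda>y. r_all_nat (\<lambda>y'.
          r_imp (r_and (R (n, y)) (R (n, y'))) (r_eq y y'))))" and
    sur: "K2_snd (K2_snd e) \<in> r_all_nat (\<lambda>y. r_imp (in_A1 (\<lambda>_. UNIV) y) (r_ex_nat (\<lambda>n. R (n, y))))"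
    unfolding r_countable_def r_ex_pow_def r_and_def by blast
  define w :: baire where "w = (\<lambda>k. if k = 0 then 1 else 0)"
  have tw: "K2_tl w = K2_num 0" "K2_fst (K2_tl w) = K2_num 0"
    unfolding w_def K2_tl_def K2_num_def K2_fst_def by auto
  have "w \<in> in_A1 (\<lambda>_. UNIV) 1"
    unfolding in_A1_def r_or_def r_ex_nat_def r_and_def r_eq_def using tw
    by (auto simp: w_def)
  with sur obtain b where "K2_app (K2_snd (K2_snd e)) (K2_num 1) = Some b"
      "b \<in> r_imp (in_A1 (\<lambda>_. UNIV) 1) (r_ex_nat (\<lambda>n. R (n, 1)))"
    unfolding r_all_nat_def by blast
  with \<open>w \<in> in_A1 (\<lambda>_. UNIV) 1\<close> obtain d where "d \<in> r_ex_nat (\<lambda>n. R (n, 1))"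
    unfolding r_imp_def by blast
  then obtain n where c1: "K2_snd d \<in> R (n, 1)" unfolding r_ex_nat_def by blast
  from tot obtain b2 where b2: "K2_app (K2_fst e) (K2_num n) = Some b2"
     "b2 \<in> r_ex_nat (\<lambda>y. r_and (R (n, y)) (in_A1 (\<lambda>_. UNIV) y))"
    unfolding r_all_nat_def by blast
  then obtain y where y: "K2_fst b2 = K2_num y" "K2_fst (K2_snd b2) \<in> R (n, y)"
    unfolding r_ex_nat_def r_and_def by blast
  have "y = 0" using y_zero[OF e1 b2(1) y(1)] .
  with y have c0: "K2_fst (K2_snd b2) \<in> R (n, 0)" by simp
  from and_nonempty[OF c0 c1] obtain c where c: "c \<in> r_and (R (n, 0)) (R (n, 1))" by blast
  from fnc obtain f1 where "K2_app (K2_fst (K2_snd e)) (K2_num n) = Some f1"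
     "f1 \<in> r_all_nat (\<lambda>y. r_all_nat (\<lambda>y'. r_imp (r_and (R (n, y)) (R (n, y'))) (r_eq y y')))"
    unfolding r_all_nat_def by blast
  then obtain f2 where "f2 \<in> r_all_nat (\<lambda>y'. r_imp (r_and (R (n, 0)) (R (n, y'))) (r_eq 0 y'))"
    unfolding r_all_nat_def by blast
  then obtain f3 where "f3 \<in> r_imp (r_and (R (n, 0)) (R (n, 1))) (r_eq 0 1)"
    unfolding r_all_nat_def by blast
  moreover have "r_eq 0 (1::nat) = {}" by (simp add: r_eq_def)
  ultimately show False using c unfolding r_imp_def by blast
qed

theorem corollary2p7:
  shows "r_valid (r_not (r_all_pow (\<lambda>A :: nat \<Rightarrow> rprop. r_countable A)))"
proof -
  have "r_all_pow (\<lambda>A :: nat \<Rightarrow> rprop. r_countable A) = {}" using no_uniform by blast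
  thus ?thesis unfolding r_valid_def r_not_def r_imp_def r_false_def by auto
qed

end
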